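(* Let $\alpha>0$, $\beta>0$, $M\in\mathbb{R}$, let $(a,b)$ be a bounded interval, and let $v$ be a local minimizer of $\mathcal{G}(\alpha,\beta,Mx,(a,b),\cdot)$. If $M\ne0$, set $L_0:=2\bigl(\frac{\alpha}{\beta M^2}\bigr)^{1/3}$. Then: (1) If $M\ne0$ and $b-a>L_0$, then in $(a,b)$ there is either a jump point $x\in S_v$ or a point $y\in(a,b)\setminus S_v$ with $v(y)=My$. (2) If $x\in S_v$, then $v(x^+)-Mx=Mx-v(x^-)$, and if $M\ne0$ this value has the same sign as $M$. (3) If $x_1<x_2$ are consecutive jump points of $v$ (no other jump points in $(x_1,x_2)$), then $v(x)=M(x_1+x_2)/2$ for every $x\in(x_1,x_2)$. (4) If $M\ne0$ and $y_1<y_2<\dots<y_m$ are the points of $(a,b)$ where $v$ intersects the line $Mx$, then $y_2-y_1=y_3-y_2=\dots=y_m-y_{m-1}$.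
   Context: $S((a,b))$ is the space of step functions with finitely many jumps on $(a,b)$ (BV functions with zero diffuse derivative and finite jump set $S_u$); $u(x^\pm)$ are one-sided values, and $u(a),u(b)$ denote values near the endpoints. $\mathcal{G}(\alpha,\beta,f,(a,b),u)=\alpha\,\#(S_u\cap(a,b))+\beta\int_a^b(u-f)^2dx$, here with $f(x)=Mx$. A local minimizer is $v\in S((a,b))$ with $\mathcal{G}(\alpha,\beta,f,(a,b),v)\le\mathcal{G}(\alpha,\beta,f,(a,b),u)$ for every $u\in S((a,b))$ with $u(a)=v(a)$, $u(b)=v(b)$. An intersection point of $v$ with the line $Mx$ is a point $y\in(a,b)\setminus S_v$ with $v(y)=My$. *)

theory Defs
  imports "HOL-Analysis.Analysis"
begin

text \<open>Values at single points are irrelevant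
(BV functions are a.e. classes); we work with one-sided limits.\<close>

definition step_fun :: "real \<Rightarrow> real \<Rightarrow> (real \<Rightarrow> real) \<Rightarrow> bool" where
  "step_fun a b u \<longleftrightarrow> (\<exists>S. finite S \<and> S \<subseteq> {a<..<b} \<and>
      (\<forall>x\<in>{a<..<b} - S. \<exists>e>0. \<forall>y\<in>ball x e. u y = u x))"

definition rval :: "(real \<Rightarrow> real) \<Rightarrow> real \<Rightarrow> real" where
  "rval u x = Lim (at_right x) u"

definition lval :: "(real \<Rightarrow> real) \<Rightarrow> real \<Rightarrow> real" where
  "lval u x = Lim (at_left x) u"

definition jumpset :: "real \<Rightarrow> real \<Rightarrow> (real \<Rightarrow> real) \<Rightarrow> real set" where
  "jumpset a b u = {x\<in>{a<..<b}. lval u x \<noteq> rval u x}"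

definition G :: "real \<Rightarrow> real \<Rightarrow> (real \<Rightarrow> real) \<Rightarrow> real \<Rightarrow> real \<Rightarrow> (real \<Rightarrow> real) \<Rightarrow> real" where
  "G \<alpha> \<beta> f a b u = \<alpha> * real (card (jumpset a b u)) + \<beta> * integral {a..b} (\<lambda>x. (u x - f x)\<^sup>2)"

definition local_min :: "real \<Rightarrow> real \<Rightarrow> (real \<Rightarrow> real) \<Rightarrow> real \<Rightarrow> real \<Rightarrow> (real \<Rightarrow> real) \<Rightarrow> bool" where
  "local_min \<alpha> \<beta> f a b v \<longleftrightarrow> step_fun a b v \<and>
     (\<forall>u. step_fun a b u \<and> rval u a = rval v a \<and> lval u b = lval v b
          \<longrightarrow> G \<alpha> \<beta> f a b v \<le> G \<alpha> \<beta> f a b u)"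

text \<open>Intersection points of v with the line M x (v(y) is the precise value, i.e. the
common one-sided limit at a non-jump point).\<close>
definition intersections :: "real \<Rightarrow> real \<Rightarrow> real \<Rightarrow> (real \<Rightarrow> real) \<Rightarrow> real set" where
  "intersections M a b v = {y\<in>{a<..<b} - jumpset a b v. rval v y = M * y}"

end

theory Submission
  imports Defs
begin


lemma rval_cong:
  assumes "d > 0" "\<forall>y. x < y \<and> y < x + d \<longrightarrow> u y = w y"
  shows "rval u x = rval w x"
proof -
  have "eventually (\<lambda>y. u y = w y) (at_right x)"
    using assms by (auto simp: eventually_at_right_field intro!: exI[of _ "x+d"])
  then show ?thesis unfolding rval_def by (rule Lim_cong) simp
qed

lemma lval_cong:
  assumes "d > 0" "\<forall>y. x - d < y \<and> y < x \<longrightarrow> u y = w y"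
  shows "lval u x = lval w x"
proof -
  have "eventually (\<lambda>y. u y = w y) (at_left x)"
    using assms by (auto simp: eventually_at_left_field intro!: exI[of _ "x-d"])
  then show ?thesis unfolding lval_def by (rule Lim_cong) simp
qed

lemma rval_const:
  assumes "d > 0" "\<forall>y. x < y \<and> y < x + d \<longrightarrow> u y = c"
  shows "rval u x = c"
proof -
  have "eventually (\<lambda>y. c = u y) (at_right x)"
    using assms by (auto simp: eventually_at_right_field intro!: exI[of _ "x+d"])
  then have "(u \<longlongrightarrow> c) (at_right x)" using tendsto_cong[of "\<lambda>_. c" u] by auto
  then show ?thesis unfolding rval_def by (simp add: tendsto_Lim)
qed

lemma lval_const:
  assumes "d > 0" "\<forall>y. x - d < y \<and> y < x \<longrightarrow> u y = c"
  shows "lval u x = c"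
proof -
  have "eventually (\<lambda>y. c = u y) (at_left x)"
    using assms by (auto simp: eventually_at_left_field intro!: exI[of _ "x-d"])
  then have "(u \<longlongrightarrow> c) (at_left x)" using tendsto_cong[of "\<lambda>_. c" u] by auto
  then show ?thesis unfolding lval_def by (simp add: tendsto_Lim)
qed

lemma const_on:
  fixes u :: "real \<Rightarrow> real"
  assumes "\<forall>y\<in>{p<..<q}. \<exists>e>0. \<forall>z\<in>ball y e. u z = u y"
  shows "\<exists>c. \<forall>y\<in>{p<..<q}. u y = c"
proof (cases "p < q")
  case True
  let ?m = "(p+q)/2"
  have "u y = u ?m" if "y \<in> {p<..<q}" for y
  proof (rule connected_local_const[of "{p<..<q}" y ?m u])
    show "connected {p<..<q}" by simp
    show "y \<in> {p<..<q}" by fact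
    show "?m \<in> {p<..<q}" using True by auto
    show "\<forall>a\<in>{p<..<q}. \<forall>\<^sub>F b in at a within {p<..<q}. u a = u b"
    proof
      fix a assume "a \<in> {p<..<q}"
      then obtain e where e: "e > 0" "\<forall>z\<in>ball a e. u z = u a" using assms by blast
      show "\<forall>\<^sub>F b in at a within {p<..<q}. u a = u b"
        unfolding eventually_at
      proof (intro exI[of _ e] conjI ballI impI)
        fix z assume "z \<in> {p<..<q}" "z \<noteq> a \<and> dist z a < e"
        then have "z \<in> ball a e" by (simp add: dist_commute)
        then show "u a = u z" using e by metis
      qed (use e in simp)
    qed
  qed
  then show ?thesis by blast
next
  case False
  then show ?thesis by auto
qed


lemma interval_vals:
  assumes "\<forall>y. p < y \<and> y < q \<longrightarrow> v y = c"
  shows "\<forall>y. p < y \<and> y < q \<longrightarrow> rval v y = c \<and> lval v y = c"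
proof (intro allI impI conjI)
  fix y assume y: "p < y \<and> y < q"
  show "rval v y = c" by (rule rval_const[of "q - y"]) (use y assms in auto)
  show "lval v y = c" by (rule lval_const[of "y - p"]) (use y assms in auto)
qed

lemma step_witness:
  assumes "step_fun a b v"
  obtains S where "finite S" "S \<subseteq> {a<..<b}" "\<forall>x\<in>{a<..<b} - S. \<exists>e>0. \<forall>y\<in>ball x e. v y = v x"
  using assms unfolding step_fun_def by blast

lemma locconst_vals:
  assumes "e > 0" "\<forall>y\<in>ball x e. v y = v x"
  shows "rval v x = v x" "lval v x = v x"
proof -
  have *: "v y = v x" if "\<bar>y - x\<bar> < e" for y
  proof -
    have "y \<in> ball x e" using that by (simp add: dist_real_def abs_minus_commute)
    then show ?thesis using assms(2) by blast
  qed
  show "rval v x = v x" by (rule rval_const[of e]) (use assms(1) in \<open>auto intro!: *\<close>)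
  show "lval v x = v x" by (rule lval_const[of e]) (use assms(1) in \<open>auto intro!: *\<close>)
qed

lemma jumpset_sub:
  assumes "finite S" "S \<subseteq> {a<..<b}" "\<forall>x\<in>{a<..<b} - S. \<exists>e>0. \<forall>y\<in>ball x e. v y = v x"
  shows "jumpset a b v \<subseteq> S"
proof
  fix z assume z: "z \<in> jumpset a b v"
  show "z \<in> S"
  proof (rule ccontr)
    assume "z \<notin> S"
    moreover have "z \<in> {a<..<b}" using z unfolding jumpset_def by auto
    ultimately obtain e where "e > 0" "\<forall>y\<in>ball z e. v y = v z" using assms(3) by blast
    then have "rval v z = v z" "lval v z = v z" using locconst_vals by blast+
    then show False using z unfolding jumpset_def by auto
  qed
qed

lemma jumpset_finite:
  assumes "step_fun a b v"
  shows "finite (jumpset a b v)"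
proof -
  obtain S where "finite S" "S \<subseteq> {a<..<b}" "\<forall>x\<in>{a<..<b} - S. \<exists>e>0. \<forall>y\<in>ball x e. v y = v x"
    using step_witness[OF assms] by blast
  then show ?thesis using jumpset_sub finite_subset by metis
qed

lemma step_local:
  assumes "step_fun a b v" "x \<in> {a<..<b}"
  shows "\<exists>e>0. a < x - e \<and> x + e < b \<and> (\<forall>y. x - e < y \<and> y < x \<longrightarrow> v y = lval v x)
            \<and> (\<forall>y. x < y \<and> y < x + e \<longrightarrow> v y = rval v x)"
proof -
  obtain S where S: "finite S" "S \<subseteq> {a<..<b}" "\<forall>x\<in>{a<..<b} - S. \<exists>e>0. \<forall>y\<in>ball x e. v y = v x"
    using step_witness[OF assms(1)] by blast
  obtain d where d: "d>0" "\<forall>s\<in>S. s \<noteq> x \<longrightarrow> d \<le> dist x s" using finite_set_avoid[OF S(1)] by blast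
  define e where "e = min d (min (x-a) (b-x)) / 2"
  have "e \<le> d/2" "e \<le> (x-a)/2" "e \<le> (b-x)/2" unfolding e_def by auto
  moreover have "e > 0" using d assms(2) by (auto simp: e_def)
  ultimately have e: "e>0" "e < d" "a < x-e" "x+e<b" using d assms(2) by auto
  have nS: "y \<notin> S" if "y \<noteq> x" "\<bar>y - x\<bar> < e" for y
    using d e that by (force simp: dist_real_def)
  have "\<exists>c. \<forall>y\<in>{x<..<x+e}. v y = c"
  proof (rule const_on, rule ballI)
    fix y assume "y \<in> {x<..<x+e}"
    then have "y \<in> {a<..<b} - S" using nS[of y] e by auto
    then show "\<exists>e>0. \<forall>z\<in>ball y e. v z = v y" using S(3) by blast
  qed
  then obtain cr where cr: "\<forall>y\<in>{x<..<x+e}. v y = cr" by blast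
  have "\<exists>c. \<forall>y\<in>{x-e<..<x}. v y = c"
  proof (rule const_on, rule ballI)
    fix y assume "y \<in> {x-e<..<x}"
    then have "y \<in> {a<..<b} - S" using nS[of y] e by auto
    then show "\<exists>e>0. \<forall>z\<in>ball y e. v z = v y" using S(3) by blast
  qed
  then obtain cl where cl: "\<forall>y\<in>{x-e<..<x}. v y = cl" by blast
  have "rval v x = cr" by (rule rval_const[of e]) (use cr e in auto)
  moreover have "lval v x = cl" by (rule lval_const[of e]) (use cl e in auto)
  ultimately show ?thesis using e cr cl by (intro exI[of _ e]) auto
qed


lemma no_jump_const:
  assumes v: "step_fun a b v" and pq: "a < p" "p < q" "q < b" and nj: "jumpset a b v \<inter> {p<..<q} = {}"
  obtains c F where "finite F" "\<forall>y\<in>{p<..<q} - F. v y = c"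
    "\<forall>y\<in>{p<..<q}. rval v y = c \<and> lval v y = c" "rval v p = c" "lval v q = c"
proof -
  have eqlr: "lval v y = rval v y" if "y \<in> {p<..<q}" for y
  proof (rule ccontr)
    assume "lval v y \<noteq> rval v y"
    then have "y \<in> jumpset a b v \<inter> {p<..<q}" using that pq unfolding jumpset_def by auto
    then show False using nj by blast
  qed
  have loc: "\<forall>y\<in>{p<..<q}. \<exists>e>0. \<forall>z\<in>ball y e. rval v z = rval v y"
  proof
    fix y assume y: "y \<in> {p<..<q}"
    then have "y \<in> {a<..<b}" using pq by auto
    then obtain e where e: "e>0" "\<forall>z. y - e < z \<and> z < y \<longrightarrow> v z = lval v y"
        "\<forall>z. y < z \<and> z < y + e \<longrightarrow> v z = rval v y"
      using step_local[OF v] by blast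
    have R: "\<forall>z. y < z \<and> z < y + e \<longrightarrow> rval v z = rval v y \<and> lval v z = rval v y"
      by (rule interval_vals) (use e in blast)
    have L: "\<forall>z. y - e < z \<and> z < y \<longrightarrow> rval v z = lval v y \<and> lval v z = lval v y"
      by (rule interval_vals) (use e in blast)
    have "rval v z = rval v y" if "z \<in> ball y e" for z
    proof -
      have "y - e < z" "z < y + e" using that by (auto simp: dist_real_def)
      then consider "z = y" | "y < z" | "z < y" by linarith
      then show ?thesis
      proof cases
        case 2 then show ?thesis using R \<open>z < y + e\<close> by blast
      next
        case 3 then show ?thesis using L \<open>y - e < z\<close> eqlr[OF y] by metis
      qed simp
    qed
    then show "\<exists>e>0. \<forall>z\<in>ball y e. rval v z = rval v y" using e(1) by blast
  qed
  obtain c where c: "\<forall>y\<in>{p<..<q}. rval v y = c" using const_on[OF loc] by blast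
  obtain S where S: "finite S" "S \<subseteq> {a<..<b}" "\<forall>x\<in>{a<..<b} - S. \<exists>e>0. \<forall>y\<in>ball x e. v y = v x"
    using step_witness[OF v] by blast
  have 1: "\<forall>y\<in>{p<..<q} - S. v y = c"
  proof
    fix y assume y: "y \<in> {p<..<q} - S"
    then have "y \<in> {a<..<b} - S" using pq by auto
    then obtain e where "e>0" "\<forall>z\<in>ball y e. v z = v y" using S(3) by blast
    then have "rval v y = v y" using locconst_vals by blast
    then show "v y = c" using c y by auto
  qed
  have 2: "\<forall>y\<in>{p<..<q}. rval v y = c \<and> lval v y = c" using c eqlr by auto
  have 3: "rval v p = c"
  proof -
    have "p \<in> {a<..<b}" using pq by auto
    then obtain e where e: "e>0" "\<forall>z. p < z \<and> z < p + e \<longrightarrow> v z = rval v p"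
      using step_local[OF v] by blast
    have R: "\<forall>z. p < z \<and> z < p + e \<longrightarrow> rval v z = rval v p \<and> lval v z = rval v p"
      by (rule interval_vals) (use e in blast)
    define m where "m = min e (q - p)"
    have m: "m \<le> q - p" "m \<le> e" "m > 0" using e pq by (auto simp: m_def)
    define y where "y = p + m / 2"
    note m
    then have "p < y \<and> y < p + e \<and> y < q" unfolding y_def by linarith
    then show ?thesis using R c by auto
  qed
  have 4: "lval v q = c"
  proof -
    have "q \<in> {a<..<b}" using pq by auto
    then obtain e where e: "e>0" "\<forall>z. q - e < z \<and> z < q \<longrightarrow> v z = lval v q"
      using step_local[OF v] by blast
    have L: "\<forall>z. q - e < z \<and> z < q \<longrightarrow> rval v z = lval v q \<and> lval v z = lval v q"
      by (rule interval_vals) (use e in blast)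
    define m where "m = min e (q - p)"
    have m: "m \<le> q - p" "m \<le> e" "m > 0" using e pq by (auto simp: m_def)
    define y where "y = q - m / 2"
    note m
    then have "q - e < y \<and> y < q \<and> p < y" unfolding y_def by linarith
    then show ?thesis using L c by auto
  qed
  show ?thesis using that[OF S(1) 1 2 3 4] .
qed


definition Pint :: "real \<Rightarrow> real \<Rightarrow> real \<Rightarrow> real \<Rightarrow> real" where
  "Pint M A p q = A^2*(q-p) - A*M*(q^2-p^2) + M^2*(q^3-p^3)/3"

lemma poly_int:
  assumes "p \<le> q"
  shows "((\<lambda>y. (A - M*y)^2) has_integral Pint M A p q) {p..q}"
proof -
  have "((\<lambda>y. (A - M*y)^2) has_integral
     ((\<lambda>y. A^2*y - A*M*y^2 + M^2*y^3/3) q - (\<lambda>y. A^2*y - A*M*y^2 + M^2*y^3/3) p)) {p..q}"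
  proof (rule fundamental_theorem_of_calculus[OF assms])
    fix x assume "x \<in> {p..q}"
    have "((\<lambda>y. A^2*y - A*M*y^2 + M^2*y^3/3) has_real_derivative (A - M*x)^2) (at x within {p..q})"
      by (auto intro!: derivative_eq_intros simp: power2_eq_square power3_eq_cube algebra_simps)
    then show "((\<lambda>y. A^2*y - A*M*y^2 + M^2*y^3/3) has_vector_derivative (A - M*x)^2) (at x within {p..q})"
      by (simp add: has_real_derivative_iff_has_vector_derivative)
  qed
  then show ?thesis by (simp add: Pint_def algebra_simps diff_divide_distrib)
qed

lemma step_integrable:
  assumes v: "step_fun a b v"
  shows "(\<lambda>x. (v x - M*x)^2) integrable_on {a..b}"
proof -
  obtain S where S: "finite S" "S \<subseteq> {a<..<b}" "\<forall>x\<in>{a<..<b} - S. \<exists>e>0. \<forall>y\<in>ball x e. v y = v x"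
    using step_witness[OF v] by blast
  have main: "\<forall>p q. card (S \<inter> {p<..<q}) = n \<longrightarrow> a \<le> p \<longrightarrow> p \<le> q \<longrightarrow> q \<le> b \<longrightarrow>
      (\<lambda>x. (v x - M*x)^2) integrable_on {p..q}" for n
  proof (induction n rule: less_induct)
    case (less n)
    show ?case
    proof (intro allI impI)
      fix p q assume n: "card (S \<inter> {p<..<q}) = n" and pq: "a \<le> p" "p \<le> q" "q \<le> b"
      show "(\<lambda>x. (v x - M*x)^2) integrable_on {p..q}"
      proof (cases "S \<inter> {p<..<q} = {}")
        case True
        have "\<exists>c. \<forall>y\<in>{p<..<q}. v y = c"
        proof (rule const_on, rule ballI)
          fix y assume "y \<in> {p<..<q}"
          then have "y \<in> {a<..<b} - S" using True pq by auto
          then show "\<exists>e>0. \<forall>z\<in>ball y e. v z = v y" using S(3) by blast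
        qed
        then obtain c where c: "\<forall>y\<in>{p<..<q}. v y = c" by blast
        have ic: "(\<lambda>x. (c - M*x)^2) integrable_on {p..q}"
          by (rule integrable_continuous_interval) (intro continuous_intros)
        show ?thesis
          by (rule integrable_spike_finite[where S="{p,q}" and f="\<lambda>x. (c - M*x)^2"]) (use c ic in auto)
      next
        case False
        then obtain s where s: "s \<in> S" "p < s" "s < q" by auto
        have fin: "finite (S \<inter> {p<..<q})" using S(1) by simp
        have "S \<inter> {p<..<s} \<subset> S \<inter> {p<..<q}" using s by auto
        then have c1: "card (S \<inter> {p<..<s}) < n" using psubset_card_mono[OF fin] n by auto
        have "S \<inter> {s<..<q} \<subset> S \<inter> {p<..<q}" using s by auto
        then have c2: "card (S \<inter> {s<..<q}) < n" using psubset_card_mono[OF fin] n by auto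
        have i1: "(\<lambda>x. (v x - M*x)^2) integrable_on {p..s}" using less c1 pq s by auto
        have i2: "(\<lambda>x. (v x - M*x)^2) integrable_on {s..q}" using less c2 pq s by auto
        show ?thesis by (rule Henstock_Kurzweil_Integration.integrable_combine[OF _ _ i1 i2]) (use s in auto)
      qed
    qed
  qed
  show ?thesis
  proof (cases "a \<le> b")
    case True then show ?thesis using main by blast
  qed auto
qed


definition modf :: "(real \<Rightarrow> real) \<Rightarrow> real \<Rightarrow> real \<Rightarrow> real \<Rightarrow> real \<Rightarrow> real" where
  "modf v p q g = (\<lambda>y. if p < y \<and> y < q then g else v y)"

lemma mod_step:
  assumes v: "step_fun a b v" and pq: "a < p" "p < q" "q < b"
  shows "step_fun a b (modf v p q g)"
proof -
  obtain S where S: "finite S" "S \<subseteq> {a<..<b}" "\<forall>x\<in>{a<..<b} - S. \<exists>e>0. \<forall>y\<in>ball x e. v y = v x"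
    using step_witness[OF v] by blast
  have "\<exists>e>0. \<forall>y\<in>ball z e. modf v p q g y = modf v p q g z" if z: "z \<in> {a<..<b} - (S \<union> {p,q})" for z
  proof -
    consider "p < z \<and> z < q" | "z < p" | "q < z" using z by force
    then show ?thesis
    proof cases
      case 1
      define e where "e = min (z - p) (q - z)"
      have e: "e > 0" "e \<le> z - p" "e \<le> q - z" using 1 by (auto simp: e_def)
      have "modf v p q g y = modf v p q g z" if "y \<in> ball z e" for y
      proof -
        have "\<bar>y - z\<bar> < e" using that by (simp add: dist_real_def abs_minus_commute)
        then have "p < y \<and> y < q" using e by linarith
        then show ?thesis using 1 by (simp add: modf_def)
      qed
      then show ?thesis using e(1) by blast
    next
      case 2
      obtain e0 where e0: "e0 > 0" "\<forall>y\<in>ball z e0. v y = v z" using S(3) z by blast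
      define e where "e = min e0 (p - z)"
      have e: "e > 0" "e \<le> e0" "e \<le> p - z" using 2 e0 by (auto simp: e_def)
      have "modf v p q g y = modf v p q g z" if "y \<in> ball z e" for y
      proof -
        have "\<bar>y - z\<bar> < e" using that by (simp add: dist_real_def abs_minus_commute)
        then have "y < p" "y \<in> ball z e0" using e by (auto simp: dist_real_def abs_minus_commute)
        then show ?thesis using 2 e0(2) by (simp add: modf_def)
      qed
      then show ?thesis using e(1) by blast
    next
      case 3
      obtain e0 where e0: "e0 > 0" "\<forall>y\<in>ball z e0. v y = v z" using S(3) z by blast
      define e where "e = min e0 (z - q)"
      have e: "e > 0" "e \<le> e0" "e \<le> z - q" using 3 e0 by (auto simp: e_def)
      have "modf v p q g y = modf v p q g z" if "y \<in> ball z e" for y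
      proof -
        have "\<bar>y - z\<bar> < e" using that by (simp add: dist_real_def abs_minus_commute)
        then have "y > q" "y \<in> ball z e0" using e by (auto simp: dist_real_def abs_minus_commute)
        then show ?thesis using 3 e0(2) by (simp add: modf_def)
      qed
      then show ?thesis using e(1) by blast
    qed
  qed
  moreover have "finite (S \<union> {p,q})" "S \<union> {p,q} \<subseteq> {a<..<b}" using S pq by auto
  ultimately show ?thesis unfolding step_fun_def by blast
qed

lemma mod_bnd:
  assumes pq: "a < p" "p < q" "q < b"
  shows "rval (modf v p q g) a = rval v a" "lval (modf v p q g) b = lval v b"
proof -
  show "rval (modf v p q g) a = rval v a"
    by (rule rval_cong[of "p - a"]) (use pq in \<open>auto simp: modf_def\<close>)
  show "lval (modf v p q g) b = lval v b"
    by (rule lval_cong[of "b - q"]) (use pq in \<open>auto simp: modf_def\<close>)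
qed

lemma mod_vals:
  assumes pq: "p < q"
  shows "z < p \<or> q < z \<Longrightarrow> rval (modf v p q g) z = rval v z \<and> lval (modf v p q g) z = lval v z"
    and "p < z \<and> z < q \<Longrightarrow> rval (modf v p q g) z = g \<and> lval (modf v p q g) z = g"
    and "rval (modf v p q g) p = g" "lval (modf v p q g) p = lval v p"
    and "rval (modf v p q g) q = rval v q" "lval (modf v p q g) q = g"
proof -
  assume z: "z < p \<or> q < z"
  then show "rval (modf v p q g) z = rval v z \<and> lval (modf v p q g) z = lval v z"
  proof
    assume z: "z < p"
    have "rval (modf v p q g) z = rval v z" by (rule rval_cong[of "p - z"]) (use z in \<open>auto simp: modf_def\<close>)
    moreover have "lval (modf v p q g) z = lval v z" by (rule lval_cong[of 1]) (use z in \<open>auto simp: modf_def\<close>)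
    ultimately show ?thesis by simp
  next
    assume z: "q < z"
    have "rval (modf v p q g) z = rval v z" by (rule rval_cong[of 1]) (use z in \<open>auto simp: modf_def\<close>)
    moreover have "lval (modf v p q g) z = lval v z" by (rule lval_cong[of "z - q"]) (use z in \<open>auto simp: modf_def\<close>)
    ultimately show ?thesis by simp
  qed
next
  assume z: "p < z \<and> z < q"
  have "rval (modf v p q g) z = g" by (rule rval_const[of "q - z"]) (use z in \<open>auto simp: modf_def\<close>)
  moreover have "lval (modf v p q g) z = g" by (rule lval_const[of "z - p"]) (use z in \<open>auto simp: modf_def\<close>)
  ultimately show "rval (modf v p q g) z = g \<and> lval (modf v p q g) z = g" by simp
next
  show "rval (modf v p q g) p = g" by (rule rval_const[of "q - p"]) (use pq in \<open>auto simp: modf_def\<close>)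
  show "lval (modf v p q g) p = lval v p" by (rule lval_cong[of 1]) (use pq in \<open>auto simp: modf_def\<close>)
  show "rval (modf v p q g) q = rval v q" by (rule rval_cong[of 1]) (use pq in \<open>auto simp: modf_def\<close>)
  show "lval (modf v p q g) q = g" by (rule lval_const[of "q - p"]) (use pq in \<open>auto simp: modf_def\<close>)
qed

lemma mod_jumps:
  assumes pq: "a < p" "p < q" "q < b"
  shows "jumpset a b (modf v p q g) = (jumpset a b v - {p..q}) \<union> {z. z = p \<and> lval v p \<noteq> g}
           \<union> {z. z = q \<and> rval v q \<noteq> g}"
proof -
  note mv = mod_vals[OF pq(2)]
  show ?thesis
  proof (rule set_eqI)
    fix z
    consider "z < p \<or> q < z" | "p < z \<and> z < q" | "z = p" | "z = q" by linarith
    then show "z \<in> jumpset a b (modf v p q g) \<longleftrightarrow> z \<in> (jumpset a b v - {p..q}) \<union> {z. z = p \<and> lval v p \<noteq> g}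
           \<union> {z. z = q \<and> rval v q \<noteq> g}"
    proof cases
      case 1 then show ?thesis using mv(1)[OF 1] pq unfolding jumpset_def by auto
    next
      case 2 then show ?thesis using mv(2)[OF 2] pq unfolding jumpset_def by auto
    next
      case 3 then show ?thesis using mv(3,4) pq unfolding jumpset_def by auto
    next
      case 4 then show ?thesis using mv(5,6) pq unfolding jumpset_def by auto
    qed
  qed
qed

lemma mod_int:
  assumes v: "step_fun a b v" and pq: "a < p" "p < q" "q < b"
    and F: "finite F" "\<forall>y\<in>{p<..<q} - F. v y = c"
  shows "integral {a..b} (\<lambda>x. (modf v p q g x - M*x)^2)
     = integral {a..b} (\<lambda>x. (v x - M*x)^2) + Pint M g p q - Pint M c p q"
proof -
  define fv where "fv = (\<lambda>x. (v x - M*x)^2)"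
  define fu where "fu = (\<lambda>x. (modf v p q g x - M*x)^2)"
  have iv: "fv integrable_on {a..b}" unfolding fv_def by (rule step_integrable[OF v])
  have iu: "fu integrable_on {a..b}" unfolding fu_def by (rule step_integrable[OF mod_step[OF v pq]])
  have split: "integral {a..b} f = integral {a..p} f + integral {p..q} f + integral {q..b} f"
    if "f integrable_on {a..b}" for f :: "real \<Rightarrow> real"
  proof -
    have "f integrable_on {p..b}" by (rule integrable_subinterval_real[OF that]) (use pq in auto)
    then have "integral {p..q} f + integral {q..b} f = integral {p..b} f"
      by (rule Henstock_Kurzweil_Integration.integral_combine[rotated 2]) (use pq in auto)
    moreover have "integral {a..p} f + integral {p..b} f = integral {a..b} f"
      by (rule Henstock_Kurzweil_Integration.integral_combine[rotated 2, OF that]) (use pq in auto)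
    ultimately show ?thesis by simp
  qed
  have "integral {a..p} fu = integral {a..p} fv"
  proof -
    have "fv integrable_on {a..p}" by (rule integrable_subinterval_real[OF iv]) (use pq in auto)
    then have "(fv has_integral integral {a..p} fv) {a..p}" by blast
    then have "(fu has_integral integral {a..p} fv) {a..p}"
      by (rule has_integral_spike_finite[where S="{p}", rotated 2]) (auto simp: fu_def fv_def modf_def)
    then show ?thesis by blast
  qed
  moreover have "integral {q..b} fu = integral {q..b} fv"
  proof -
    have "fv integrable_on {q..b}" by (rule integrable_subinterval_real[OF iv]) (use pq in auto)
    then have "(fv has_integral integral {q..b} fv) {q..b}" by blast
    then have "(fu has_integral integral {q..b} fv) {q..b}"
      by (rule has_integral_spike_finite[where S="{q}", rotated 2]) (auto simp: fu_def fv_def modf_def)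
    then show ?thesis by blast
  qed
  moreover have "integral {p..q} fu = Pint M g p q"
  proof -
    have "((\<lambda>y. (g - M*y)^2) has_integral Pint M g p q) {p..q}" by (rule poly_int) (use pq in auto)
    then have "(fu has_integral Pint M g p q) {p..q}"
      by (rule has_integral_spike_finite[where S="{p,q}", rotated 2]) (auto simp: fu_def modf_def)
    then show ?thesis by blast
  qed
  moreover have "integral {p..q} fv = Pint M c p q"
  proof -
    have "((\<lambda>y. (c - M*y)^2) has_integral Pint M c p q) {p..q}" by (rule poly_int) (use pq in auto)
    then have "(fv has_integral Pint M c p q) {p..q}"
      by (rule has_integral_spike_finite[where S="F \<union> {p,q}", rotated 2]) (use F in \<open>auto simp: fv_def\<close>)
    then show ?thesis by blast
  qed
  ultimately show ?thesis using split[OF iv] split[OF iu] unfolding fu_def[symmetric] fv_def[symmetric] by simp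
qed


lemma Pint_diff: "Pint M A p q - Pint M B p q = (A - B) * (q - p) * (A + B - M * (p + q))"
  by (simp add: Pint_def power2_eq_square algebra_simps)

lemma compet:
  assumes lm: "local_min \<alpha> \<beta> (\<lambda>x. M*x) a b v" and pq: "a < p" "p < q" "q < b"
    and F: "finite F" "\<forall>y\<in>{p<..<q} - F. v y = c"
  shows "\<beta> * (Pint M c p q - Pint M g p q)
     \<le> \<alpha> * (real (card (jumpset a b (modf v p q g))) - real (card (jumpset a b v)))"
proof -
  have v: "step_fun a b v" using lm unfolding local_min_def by blast
  have "G \<alpha> \<beta> (\<lambda>x. M*x) a b v \<le> G \<alpha> \<beta> (\<lambda>x. M*x) a b (modf v p q g)"
    using lm mod_step[OF v pq] mod_bnd[OF pq] unfolding local_min_def by blast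
  then have G: "\<alpha> * real (card (jumpset a b v)) + \<beta> * integral {a..b} (\<lambda>x. (v x - M*x)^2)
     \<le> \<alpha> * real (card (jumpset a b (modf v p q g))) + \<beta> * integral {a..b} (\<lambda>x. (modf v p q g x - M*x)^2)"
    unfolding G_def by simp
  have "\<beta> * integral {a..b} (\<lambda>x. (modf v p q g x - M*x)^2) =
     \<beta> * integral {a..b} (\<lambda>x. (v x - M*x)^2) + \<beta> * Pint M g p q - \<beta> * Pint M c p q"
    unfolding mod_int[OF v pq F, where M=M and g=g] by (simp add: algebra_simps)
  then show ?thesis using G by (simp add: right_diff_distrib)
qed

lemma small_le:
  fixes X C e :: real
  assumes "e > 0" "\<forall>t. 0 < t \<and> t < e \<longrightarrow> X \<le> C * t"
  shows "X \<le> 0"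
proof (rule ccontr)
  assume X: "\<not> X \<le> 0"
  show False
  proof (cases "C \<le> 0")
    case True
    have "X \<le> C * (e/2)" using assms(2)[rule_format, of "e/2"] assms(1) by auto
    moreover have "C * (e/2) \<le> 0" using True assms(1) by (simp add: mult_nonpos_nonneg)
    ultimately show False using X by linarith
  next
    case False
    define t where "t = min (e/2) (X / (2*C))"
    have t: "0 < t" "t < e" "t \<le> X / (2*C)" using X False assms(1) by (auto simp: t_def)
    have "C * t \<le> C * (X / (2*C))" using t False by (intro mult_left_mono) auto
    also have "\<dots> = X / 2" using False by simp
    finally show False using assms(2) t X by force
  qed
qed

lemma sgn_prod:
  fixes y z :: real
  assumes "y * z > 0" shows "sgn y = sgn z"
  using assms by (auto simp: zero_less_mult_iff)

lemma card_swap: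
  assumes "finite J" "x \<in> J" "y \<notin> J"
  shows "card (insert y (J - {x})) = card J"
proof -
  have "card J > 0" using assms by (auto simp: card_gt_0_iff)
  then show ?thesis using assms by (simp add: card_insert_disjoint card_Diff_singleton)
qed

lemma part2:
  assumes lm: "local_min \<alpha> \<beta> (\<lambda>x. M*x) a b v" and "\<beta> > 0" and x: "x \<in> jumpset a b v"
  shows "rval v x - M * x = M * x - lval v x \<and> (M \<noteq> 0 \<longrightarrow> sgn (rval v x - M * x) = sgn M)"
proof -
  have v: "step_fun a b v" using lm unfolding local_min_def by blast
  have xab: "x \<in> {a<..<b}" and LR: "lval v x \<noteq> rval v x" using x unfolding jumpset_def by auto
  define L where "L = lval v x"
  define R where "R = rval v x"
  obtain e where e: "e>0" "a < x - e" "x + e < b" "\<forall>y. x - e < y \<and> y < x \<longrightarrow> v y = L"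
        "\<forall>y. x < y \<and> y < x + e \<longrightarrow> v y = R"
    using step_local[OF v xab] unfolding L_def R_def by blast
  have Rv: "\<forall>y. x < y \<and> y < x + e \<longrightarrow> rval v y = R \<and> lval v y = R"
    by (rule interval_vals) (use e in blast)
  have Lv: "\<forall>y. x - e < y \<and> y < x \<longrightarrow> rval v y = L \<and> lval v y = L"
    by (rule interval_vals) (use e in blast)
  have fin: "finite (jumpset a b v)" by (rule jumpset_finite[OF v])
  define J where "J = jumpset a b v"
  define D where "D = R - L"
  define K where "K = R + L - 2 * M * x"
  have D: "D \<noteq> 0" using LR by (simp add: D_def L_def R_def)
  have right: "D * K \<le> D * M * t" if t: "0 < t" "t < e" for t
  proof -
    have J1: "jumpset a b (modf v x (x+t) L) = insert (x+t) (J - {x})"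
    proof -
      have "jumpset a b (modf v x (x+t) L) = (J - {x..x+t}) \<union> {z. z = x \<and> lval v x \<noteq> L}
           \<union> {z. z = x+t \<and> rval v (x+t) \<noteq> L}"
        unfolding J_def by (rule mod_jumps) (use e t in auto)
      moreover have "J - {x..x+t} = J - {x}"
      proof -
        have nz: "z \<notin> J" if "x < z" "z \<le> x + t" for z
          using Rv that t unfolding J_def jumpset_def by force
        have "z \<in> J - {x..x+t} \<longleftrightarrow> z \<in> J - {x}" for z using nz[of z] t by (cases "x < z") auto
        then show ?thesis by blast
      qed
      moreover have "rval v (x+t) = R" using Rv t by auto
      ultimately show ?thesis using LR by (auto simp: L_def R_def)
    qed
    have "x + t \<notin> J" using Rv t unfolding J_def jumpset_def by force
    then have "card (jumpset a b (modf v x (x+t) L)) = card J" unfolding J1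
      by (rule card_swap[rotated 2]) (use fin x in \<open>auto simp: J_def\<close>)
    then have "\<beta> * (Pint M R x (x+t) - Pint M L x (x+t)) \<le> 0"
      using compet[OF lm _ _ _ finite.emptyI, of x "x+t" R L] e t unfolding J_def by auto
    then have "Pint M R x (x+t) - Pint M L x (x+t) \<le> 0" using \<open>\<beta> > 0\<close>
      by (simp add: mult_le_0_iff)
    then have "D * t * (K - M * t) \<le> 0" unfolding Pint_diff D_def K_def by (simp add: algebra_simps)
    then have "t * (D * K - D * M * t) \<le> 0" by (simp add: algebra_simps)
    then show ?thesis using t by (simp add: mult_le_0_iff)
  qed
  have left: "- (D * K) \<le> D * M * t" if t: "0 < t" "t < e" for t
  proof -
    have J1: "jumpset a b (modf v (x-t) x R) = insert (x-t) (J - {x})"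
    proof -
      have "jumpset a b (modf v (x-t) x R) = (J - {x-t..x}) \<union> {z. z = x-t \<and> lval v (x-t) \<noteq> R}
           \<union> {z. z = x \<and> rval v x \<noteq> R}"
        unfolding J_def by (rule mod_jumps) (use e t in auto)
      moreover have "J - {x-t..x} = J - {x}"
      proof -
        have nz: "z \<notin> J" if "x - t \<le> z" "z < x" for z
          using Lv that t unfolding J_def jumpset_def by force
        have "z \<in> J - {x-t..x} \<longleftrightarrow> z \<in> J - {x}" for z using nz[of z] t by (cases "z < x") auto
        then show ?thesis by blast
      qed
      moreover have "lval v (x-t) = L" using Lv t by auto
      ultimately show ?thesis using LR by (auto simp: L_def R_def)
    qed
    have "x - t \<notin> J" using Lv t unfolding J_def jumpset_def by force
    then have "card (jumpset a b (modf v (x-t) x R)) = card J" unfolding J1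
      by (rule card_swap[rotated 2]) (use fin x in \<open>auto simp: J_def\<close>)
    then have "\<beta> * (Pint M L (x-t) x - Pint M R (x-t) x) \<le> 0"
      using compet[OF lm _ _ _ finite.emptyI, of "x-t" x L R] e t unfolding J_def by auto
    then have "Pint M L (x-t) x - Pint M R (x-t) x \<le> 0" using \<open>\<beta> > 0\<close>
      by (simp add: mult_le_0_iff)
    then have "- D * t * (K + M * t) \<le> 0" unfolding Pint_diff D_def K_def by (simp add: algebra_simps)
    then have "t * (- (D * K) - D * M * t) \<le> 0" by (simp add: algebra_simps)
    then show ?thesis using t by (simp add: mult_le_0_iff)
  qed
  have "D * K \<le> 0" by (rule small_le[OF e(1)]) (use right in auto)
  moreover have "- (D * K) \<le> 0" by (rule small_le[OF e(1)]) (use left in auto)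
  ultimately have "D * K = 0" by linarith
  then have K0: "K = 0" using D by simp
  then have eq: "R - M * x = M * x - L" unfolding K_def by linarith
  have "D * M * (e/2) \<ge> 0" using right[of "e/2"] e(1) K0 by simp
  then have DM: "D * M \<ge> 0" using e(1) by (simp add: zero_le_mult_iff)
  have "M \<noteq> 0 \<longrightarrow> sgn (R - M * x) = sgn M"
  proof
    assume M: "M \<noteq> 0"
    have "R - L = 2 * R - 2 * (M * x)" using eq by linarith
    then have "D = 2 * (R - M * x)" unfolding D_def by (simp add: right_diff_distrib)
    then have "D * M = 2 * ((R - M * x) * M)" by simp
    then have "2 * ((R - M * x) * M) \<ge> 0" using DM by linarith
    then have "(R - M * x) * M \<ge> 0" by (simp add: mult.commute)
    moreover have "R - M * x \<noteq> 0" using D \<open>D = 2 * (R - M * x)\<close> by auto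
    then have "(R - M * x) * M \<noteq> 0" using M by (simp only: mult_eq_0_iff) simp
    ultimately have "(R - M * x) * M > 0" by linarith
    then show "sgn (R - M * x) = sgn M" by (rule sgn_prod)
  qed
  then show ?thesis using eq unfolding L_def R_def by blast
qed


lemma part3:
  assumes lm: "local_min \<alpha> \<beta> (\<lambda>x. M*x) a b v" and ab: "\<alpha> > 0" "\<beta> > 0"
    and x: "x1 \<in> jumpset a b v" "x2 \<in> jumpset a b v" "x1 < x2" "{x1<..<x2} \<inter> jumpset a b v = {}"
  shows "\<forall>x\<in>{x1<..<x2}. rval v x = M * (x1 + x2) / 2"
proof -
  have v: "step_fun a b v" using lm unfolding local_min_def by blast
  have xab: "a < x1" "x2 < b" using x unfolding jumpset_def by auto
  have nj: "jumpset a b v \<inter> {x1<..<x2} = {}" using x(4) by blast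
  obtain c F where cF: "finite F" "\<forall>y\<in>{x1<..<x2} - F. v y = c"
    "\<forall>y\<in>{x1<..<x2}. rval v y = c \<and> lval v y = c"
    using no_jump_const[OF v xab(1) x(3) xab(2) nj] by metis
  define m where "m = M * (x1 + x2) / 2"
  have fin: "finite (jumpset a b v)" by (rule jumpset_finite[OF v])
  have "jumpset a b (modf v x1 x2 m) = (jumpset a b v - {x1..x2}) \<union> {z. z = x1 \<and> lval v x1 \<noteq> m}
           \<union> {z. z = x2 \<and> rval v x2 \<noteq> m}"
    by (rule mod_jumps) (use xab x in auto)
  then have "jumpset a b (modf v x1 x2 m) \<subseteq> jumpset a b v" using x by auto
  then have "card (jumpset a b (modf v x1 x2 m)) \<le> card (jumpset a b v)" using fin by (rule card_mono[rotated])
  then have "\<alpha> * (real (card (jumpset a b (modf v x1 x2 m))) - real (card (jumpset a b v))) \<le> 0"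
    using ab by (simp add: mult_le_0_iff)
  then have "\<beta> * (Pint M c x1 x2 - Pint M m x1 x2) \<le> 0"
    using compet[OF lm xab(1) x(3) xab(2) cF(1,2), of m] by linarith
  then have "Pint M c x1 x2 - Pint M m x1 x2 \<le> 0" using ab by (simp add: mult_le_0_iff)
  moreover have "Pint M c x1 x2 - Pint M m x1 x2 = (x2 - x1) * (c - m)^2"
  proof -
    have "c + m - M * (x1 + x2) = c - m" unfolding m_def by simp
    then show ?thesis unfolding Pint_diff by (simp add: power2_eq_square)
  qed
  ultimately have "(x2 - x1) * (c - m)^2 \<le> 0" by simp
  then have "(c - m)^2 \<le> 0" using x(3) by (simp add: mult_le_0_iff)
  then have "c = m" by simp
  then show ?thesis using cF(3) unfolding m_def by auto
qed

lemma part1: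
  assumes lm: "local_min \<alpha> \<beta> (\<lambda>x. M*x) a b v" and ab: "\<alpha> > 0" "\<beta> > 0"
    and M: "M \<noteq> 0" and len: "b - a > 2 * (\<alpha> / (\<beta> * M\<^sup>2)) powr (1/3)"
    and J: "jumpset a b v = {}" and I: "intersections M a b v = {}"
  shows False
proof -
  have v: "step_fun a b v" using lm unfolding local_min_def by blast
  define X where "X = \<alpha> / (\<beta> * M\<^sup>2)"
  have M2: "M^2 > 0" using M by simp
  have X: "X > 0" unfolding X_def using ab M2 by simp
  define l0 where "l0 = 2 * X powr (1/3)"
  have l0: "l0 \<ge> 0" unfolding l0_def by simp
  define \<delta> where "\<delta> = (b - a - l0) / 4"
  have d: "\<delta> > 0" using len unfolding \<delta>_def l0_def X_def by simp
  define p where "p = a + \<delta>"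
  define q where "q = b - \<delta>"
  define l where "l = q - p"
  have l: "l = l0 + 2 * \<delta>" unfolding l_def p_def q_def \<delta>_def by (simp add: field_simps)
  have pq: "a < p" "p < q" "q < b" using d l l0 unfolding p_def q_def l_def by linarith+
  have nj: "jumpset a b v \<inter> {p<..<q} = {}" using J by simp
  obtain c F where cF: "finite F" "\<forall>y\<in>{p<..<q} - F. v y = c"
    "\<forall>y\<in>{p<..<q}. rval v y = c \<and> lval v y = c"
    using no_jump_const[OF v pq nj] by metis
  have cy: "c \<noteq> M * y" if "y \<in> {p<..<q}" for y
  proof
    assume "c = M * y"
    then have "y \<in> intersections M a b v" using that cF(3) J pq unfolding intersections_def by auto
    then show False using I by simp
  qed
  define m where "m = M * (p + q) / 2"
  have cm: "\<bar>c - m\<bar> \<ge> \<bar>M\<bar> * l / 2"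
  proof (rule ccontr)
    assume "\<not> ?thesis"
    then have lt: "\<bar>c - m\<bar> < \<bar>M\<bar> * l / 2" by simp
    define y0 where "y0 = c / M"
    have cy0: "c = M * y0" unfolding y0_def using M by simp
    have "c - m = M * (y0 - (p + q) / 2)" unfolding cy0 m_def by (simp add: algebra_simps)
    then have "\<bar>M\<bar> * \<bar>y0 - (p + q) / 2\<bar> < \<bar>M\<bar> * (l / 2)" using lt by (simp add: abs_mult)
    then have "\<bar>y0 - (p + q) / 2\<bar> < l / 2" using M by simp
    then have "- (l/2) < y0 - (p + q) / 2 \<and> y0 - (p + q) / 2 < l / 2" using abs_less_iff[of "y0 - (p + q) / 2" "l / 2"] by linarith
    then have "y0 \<in> {p<..<q}" unfolding l_def by (auto simp: field_simps)
    then show False using cy cy0 by blast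
  qed
  have "(\<bar>M\<bar> * l / 2)^2 \<le> \<bar>c - m\<bar>^2"
    by (rule power_mono[OF cm]) (use pq in \<open>simp add: l_def\<close>)
  then have sq: "M^2 * l^2 / 4 \<le> (c - m)^2" by (simp add: power_mult_distrib power_divide)
  have "jumpset a b (modf v p q m) = (jumpset a b v - {p..q}) \<union> {z. z = p \<and> lval v p \<noteq> m}
           \<union> {z. z = q \<and> rval v q \<noteq> m}"
    by (rule mod_jumps) (use pq in auto)
  then have "jumpset a b (modf v p q m) \<subseteq> {p, q}" using J by auto
  then have "card (jumpset a b (modf v p q m)) \<le> card {p, q}" by (rule card_mono[rotated]) simp
  also have "\<dots> \<le> 2" by (simp add: card_insert_le_m1)
  finally have "real (card (jumpset a b (modf v p q m))) \<le> 2" by simp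
  then have "\<alpha> * (real (card (jumpset a b (modf v p q m))) - real (card (jumpset a b v))) \<le> 2 * \<alpha>"
    using ab J by simp
  then have "\<beta> * (Pint M c p q - Pint M m p q) \<le> 2 * \<alpha>"
    using compet[OF lm pq cF(1,2), of m] by linarith
  moreover have "Pint M c p q - Pint M m p q = l * (c - m)^2"
  proof -
    have "c + m - M * (p + q) = c - m" unfolding m_def by simp
    then show ?thesis unfolding Pint_diff l_def by (simp add: power2_eq_square)
  qed
  ultimately have A: "\<beta> * (l * (c - m)^2) \<le> 2 * \<alpha>" by simp
  have "\<beta> * (l * (M^2 * l^2 / 4)) \<le> \<beta> * (l * (c - m)^2)"
    using sq ab pq unfolding l_def by (intro mult_left_mono) auto
  with A have B: "\<beta> * M^2 * l^3 \<le> 8 * \<alpha>" by (simp add: power2_eq_square power3_eq_cube algebra_simps)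
  have "X powr (1/3) < l / 2" using l d unfolding l0_def by simp
  then have "(X powr (1/3))^3 < (l/2)^3" by (rule power_strict_mono) auto
  moreover have "(X powr (1/3))^3 = X" using X by (simp add: powr_power)
  ultimately have "X < l^3 / 8" by (simp add: power_divide)
  then have "\<alpha> / (\<beta> * M\<^sup>2) < l^3 / 8" unfolding X_def .
  then have "\<alpha> < l^3 / 8 * (\<beta> * M\<^sup>2)" using ab M2 by (simp add: divide_less_eq)
  then show False using B by (simp add: algebra_simps)
qed


lemma consec_int:
  assumes lm: "local_min \<alpha> \<beta> (\<lambda>x. M*x) a b v" and ab: "\<alpha> > 0" "\<beta> > 0" and M: "M \<noteq> 0"
    and y: "y1 \<in> intersections M a b v" "y2 \<in> intersections M a b v" "y1 < y2"
      "{y1<..<y2} \<inter> intersections M a b v = {}"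
  shows "jumpset a b v \<inter> {y1<..<y2} = {(y1 + y2) / 2}"
proof -
  have v: "step_fun a b v" using lm unfolding local_min_def by blast
  define J where "J = jumpset a b v"
  have fin: "finite J" unfolding J_def by (rule jumpset_finite[OF v])
  have y1: "a < y1" "y1 < b" "y1 \<notin> J" "rval v y1 = M * y1" using y(1) unfolding intersections_def J_def by auto
  have y2: "a < y2" "y2 < b" "y2 \<notin> J" "rval v y2 = M * y2" using y(2) unfolding intersections_def J_def by auto
  have y2l: "lval v y2 = M * y2" using y2 unfolding J_def jumpset_def by auto
  have ne: "J \<inter> {y1<..<y2} \<noteq> {}"
  proof
    assume e: "J \<inter> {y1<..<y2} = {}"
    obtain c F where "rval v y1 = c" "lval v y2 = c"
      using no_jump_const[OF v y1(1) y(3) y2(2) e[unfolded J_def]] by metis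
    then have "M * y1 = M * y2" using y1 y2l by simp
    then show False using M y(3) by simp
  qed
  define x where "x = Min (J \<inter> {y1<..<y2})"
  have finx: "finite (J \<inter> {y1<..<y2})" using fin by simp
  have x: "x \<in> J" "y1 < x" "x < y2" using Min_in[OF finx ne] unfolding x_def by auto
  have xmin: "\<forall>z\<in>J \<inter> {y1<..<y2}. x \<le> z" unfolding x_def using finx by auto
  have only: "J \<inter> {y1<..<y2} = {x}"
  proof (rule ccontr)
    assume "J \<inter> {y1<..<y2} \<noteq> {x}"
    moreover have "x \<in> J \<inter> {y1<..<y2}" using x by auto
    ultimately have "\<exists>z\<in>J \<inter> {y1<..<y2}. z \<noteq> x" by blast
    then obtain z where z: "z \<in> J" "y1 < z" "z < y2" "z \<noteq> x" by auto
    then have "x < z" using xmin by force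
    then have ne2: "J \<inter> {x<..<y2} \<noteq> {}" using z by auto
    have finx2: "finite (J \<inter> {x<..<y2})" using fin by simp
    define x' where "x' = Min (J \<inter> {x<..<y2})"
    have x': "x' \<in> J" "x < x'" "x' < y2" using Min_in[OF finx2 ne2] unfolding x'_def by auto
    have x'min: "\<forall>z\<in>J \<inter> {x<..<y2}. x' \<le> z" unfolding x'_def using finx2 by auto
    have gap: "{x<..<x'} \<inter> jumpset a b v = {}" using x'min x' unfolding J_def by force
    have r: "\<forall>w\<in>{x<..<x'}. rval v w = M * (x + x') / 2"
      using part3[OF lm ab x(1)[unfolded J_def] x'(1)[unfolded J_def] x'(2) gap] .
    define w where "w = (x + x') / 2"
    have w: "x < w" "w < x'" using x' unfolding w_def by auto
    have "w \<notin> jumpset a b v" using gap w by auto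
    moreover have "rval v w = M * w" using r w unfolding w_def by auto
    moreover have "y1 < w" "w < y2" using w x x' by auto
    ultimately have "w \<in> {y1<..<y2} \<inter> intersections M a b v"
      using y1 y2 unfolding intersections_def by auto
    then show False using y(4) by blast
  qed
  have e1: "jumpset a b v \<inter> {y1<..<x} = {}" using xmin x unfolding J_def by force
  obtain c1 F1 where c1: "rval v y1 = c1" "lval v x = c1"
    using no_jump_const[OF v y1(1) x(2) _ e1] x y2 by (metis less_trans)
  have nz: "z \<notin> J" if "x < z" "z < y2" for z
  proof
    assume "z \<in> J"
    then have "z \<in> J \<inter> {y1<..<y2}" using that x by auto
    then show False using only that by auto
  qed
  have e2: "jumpset a b v \<inter> {x<..<y2} = {}" using nz unfolding J_def by auto
  obtain c2 F2 where c2: "rval v x = c2" "lval v y2 = c2"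
    using no_jump_const[OF v _ x(3) y2(2) e2] x y1 by (metis less_trans)
  have "rval v x - M * x = M * x - lval v x"
    using part2[OF lm ab(2) x(1)[unfolded J_def]] by blast
  then have "M * y2 - M * x = M * x - M * y1" using c1 c2 y1 y2l by simp
  then have "M * (y1 + y2 - 2 * x) = 0" by (simp add: algebra_simps)
  then have "x = (y1 + y2) / 2" using M by simp
  then show ?thesis using only unfolding J_def by simp
qed

lemma part4:
  assumes lm: "local_min \<alpha> \<beta> (\<lambda>x. M*x) a b v" and ab: "\<alpha> > 0" "\<beta> > 0" and M: "M \<noteq> 0"
    and y: "y1 \<in> intersections M a b v" "y2 \<in> intersections M a b v" "y3 \<in> intersections M a b v"
      "y1 < y2" "y2 < y3"
      "{y1<..<y2} \<inter> intersections M a b v = {}" "{y2<..<y3} \<inter> intersections M a b v = {}"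
  shows "y2 - y1 = y3 - y2"
proof -
  define J where "J = jumpset a b v"
  define x where "x = (y1 + y2) / 2"
  define x' where "x' = (y2 + y3) / 2"
  have j1: "J \<inter> {y1<..<y2} = {x}" unfolding J_def x_def by (rule consec_int[OF lm ab M y(1,2,4,6)])
  have j2: "J \<inter> {y2<..<y3} = {x'}" unfolding J_def x'_def by (rule consec_int[OF lm ab M y(2,3,5,7)])
  have y2: "y2 \<notin> J" "rval v y2 = M * y2" using y(2) unfolding intersections_def J_def by auto
  have xJ: "x \<in> J" "x' \<in> J" using j1 j2 by auto
  have xx: "x < y2" "y2 < x'" using y unfolding x_def x'_def by auto
  have gap: "{x<..<x'} \<inter> jumpset a b v = {}"
  proof -
    have "z \<notin> J" if "x < z" "z < x'" for z
    proof
      assume zJ: "z \<in> J"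
      consider "z < y2" | "z = y2" | "y2 < z" by linarith
      then show False
      proof cases
        case 1
        have "y1 < z" using that y unfolding x_def by auto
        then have "z \<in> J \<inter> {y1<..<y2}" using zJ 1 by auto
        then show False using j1 that by auto
      next
        case 2 then show False using zJ y2 by simp
      next
        case 3
        have "z < y3" using that y unfolding x'_def by auto
        then have "z \<in> J \<inter> {y2<..<y3}" using zJ 3 by auto
        then show False using j2 that by auto
      qed
    qed
    then show ?thesis unfolding J_def by auto
  qed
  have "rval v y2 = M * (x + x') / 2"
    using part3[OF lm ab xJ[unfolded J_def] _ gap] xx by auto
  then have "M * y2 = M * ((x + x') / 2)" using y2 by simp
  then have "y2 = (x + x') / 2" using M by simp
  then show ?thesis unfolding x_def x'_def by (simp add: field_simps)
qed


theorem lemma4p5: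
  fixes \<alpha> \<beta> M a b :: real and v :: "real \<Rightarrow> real"
  assumes "\<alpha> > 0" "\<beta> > 0" "a < b"
    and "local_min \<alpha> \<beta> (\<lambda>x. M * x) a b v"
  shows
   "(M \<noteq> 0 \<and> b - a > 2 * (\<alpha> / (\<beta> * M\<^sup>2)) powr (1/3) \<longrightarrow>
       jumpset a b v \<noteq> {} \<or> intersections M a b v \<noteq> {})
  \<and> (\<forall>x\<in>jumpset a b v. rval v x - M * x = M * x - lval v x \<and>
       (M \<noteq> 0 \<longrightarrow> sgn (rval v x - M * x) = sgn M))
  \<and> (\<forall>x1 x2. x1 \<in> jumpset a b v \<and> x2 \<in> jumpset a b v \<and> x1 < x2 \<and>
       {x1<..<x2} \<inter> jumpset a b v = {} \<longrightarrow>
       (\<forall>x\<in>{x1<..<x2}. rval v x = M * (x1 + x2) / 2))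
  \<and> (M \<noteq> 0 \<longrightarrow> (\<forall>y1 y2 y3. y1 \<in> intersections M a b v \<and> y2 \<in> intersections M a b v \<and>
       y3 \<in> intersections M a b v \<and> y1 < y2 \<and> y2 < y3 \<and>
       {y1<..<y2} \<inter> intersections M a b v = {} \<and> {y2<..<y3} \<inter> intersections M a b v = {}
       \<longrightarrow> y2 - y1 = y3 - y2))"
  proof -
  note lm = assms(4)
  have A: "\<alpha> > 0" "\<beta> > 0" using assms by auto
  show ?thesis
  proof (intro conjI)
    show "M \<noteq> 0 \<and> b - a > 2 * (\<alpha> / (\<beta> * M\<^sup>2)) powr (1/3) \<longrightarrow>
       jumpset a b v \<noteq> {} \<or> intersections M a b v \<noteq> {}"
      using part1[OF lm A] by blast
    show "\<forall>x\<in>jumpset a b v. rval v x - M * x = M * x - lval v x \<and>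
       (M \<noteq> 0 \<longrightarrow> sgn (rval v x - M * x) = sgn M)"
      using part2[OF lm A(2)] by blast
    show "\<forall>x1 x2. x1 \<in> jumpset a b v \<and> x2 \<in> jumpset a b v \<and> x1 < x2 \<and>
       {x1<..<x2} \<inter> jumpset a b v = {} \<longrightarrow>
       (\<forall>x\<in>{x1<..<x2}. rval v x = M * (x1 + x2) / 2)"
      using part3[OF lm A] by blast
    show "M \<noteq> 0 \<longrightarrow> (\<forall>y1 y2 y3. y1 \<in> intersections M a b v \<and> y2 \<in> intersections M a b v \<and>
       y3 \<in> intersections M a b v \<and> y1 < y2 \<and> y2 < y3 \<and>
       {y1<..<y2} \<inter> intersections M a b v = {} \<and> {y2<..<y3} \<inter> intersections M a b v = {}
       \<longrightarrow> y2 - y1 = y3 - y2)"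
      using part4[OF lm A] by blast
  qed
qed

end
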